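(* Let $U$ be a finite set of cardinality $n\ge1$. There is a bijection between the set $(C\circ\mathcal P)^\bullet[U]$ and the set of pairs $(\mathcal X,\lambda)$ where $\mathcal X$ is an $n$-periodic Ptolemy diagram of the $\infty$-gon all of whose arcs have length at most $n$, and $\lambda$ is a bijection from the set $\mathbb Z/n\mathbb Z$ of residue classes of vertices of the $\infty$-gon modulo $n$ to $U$.
   Context: An arc of the $\infty$-gon is a pair $(i,j)$ of integers with $j-i\ge2$, of length $j-i$; the vertices of the $\infty$-gon are the integers. A collection of arcs is $n$-periodic if it is closed under $(i,j)\mapsto(i+tn,j+tn)$, $t\in\mathbb Z$. Two arcs $(i,j),(k,l)$ cross if $i<k<j<l$ or $k<i<l<j$. A Ptolemy diagram of the $\infty$-gon is a collection $\mathcal X$ of arcs such that whenever $(i,j),(r,s)\in\mathcal X$ cross with $i<r$, each of $(i,r),(i,s),(r,j),(j,s)$ which is an arc lies in $\mathcal X$. For $N\ge 3$, a Ptolemy diagram of a convex $N$-gon is a set of diagonals such that whenever two diagonals in it cross, all diagonals among their four endpoints belong to it. A Ptolemy diagram with distinguished base edge on the $(N+1)$-gon, $N\ge1$, is a Ptolemy diagram of the $(N+1)$-gon together with a chosen edge (for $N=1$: the degenerate diagram consisting of two vertices and one edge); the base vertex is the first vertex of the base edge going counterclockwise. For a finite set $V$ with $|V|=N$, $\mathcal P[V]$ is the set of Ptolemy diagrams with distinguished base edge on the $(N+1)$-gon whose non-base vertices are labelled bijectively by $V$. $(C\circ\mathcal P)[U]$ is the set of cyclically ordered tuples $(P_1,\dots,P_r)$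 (up to cyclic rotation) where $U=V_1\sqcup\dots\sqcup V_r$ is a set partition into nonempty blocks and $P_s\in\mathcal P[V_s]$. The pointed version $(C\circ\mathcal P)^\bullet[U]$ is the set of pairs $(\gamma,u)$ with $\gamma\in(C\circ\mathcal P)[U]$ and $u\in U$. *)

theory Defs
  imports "HOL-Library.FuncSet"
begin

definition crosses :: "'a::linorder \<times> 'a \<Rightarrow> 'a \<times> 'a \<Rightarrow> bool" where
  "crosses a b \<longleftrightarrow> (case a of (i, j) \<Rightarrow> case b of (k, l) \<Rightarrow>
      (i < k \<and> k < j \<and> j < l) \<or> (k < i \<and> i < l \<and> l < j))"

definition is_arc :: "int \<times> int \<Rightarrow> bool" where
  "is_arc a \<longleftrightarrow> snd a - fst a \<ge> 2"

definition arc_length :: "int \<times> int \<Rightarrow> int" where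
  "arc_length a = snd a - fst a"

definition periodic_arcs :: "int \<Rightarrow> (int \<times> int) set \<Rightarrow> bool" where
  "periodic_arcs n X \<longleftrightarrow> (\<forall>i j t. (i, j) \<in> X \<longrightarrow> (i + t * n, j + t * n) \<in> X)"

definition ptolemy_inf :: "(int \<times> int) set \<Rightarrow> bool" where
  "ptolemy_inf X \<longleftrightarrow> (\<forall>a \<in> X. is_arc a) \<and>
     (\<forall>i j r s. (i, j) \<in> X \<and> (r, s) \<in> X \<and> crosses (i, j) (r, s) \<and> i < r \<longrightarrow>
        (\<forall>b \<in> {(i, r), (i, s), (r, j), (j, s)}. is_arc b \<longrightarrow> b \<in> X))"

definition zmod_classes :: "int \<Rightarrow> int set set" where
  "zmod_classes n = {{k. k mod n = i mod n} | i. True}"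

text \<open>A convex M-gon has vertices 0,...,M-1 in counterclockwise order.
  Diagonals are pairs (i,j), i<j, of non-adjacent vertices.\<close>
definition is_diagonal :: "nat \<Rightarrow> nat \<times> nat \<Rightarrow> bool" where
  "is_diagonal M d \<longleftrightarrow> (case d of (i, j) \<Rightarrow>
      i < j \<and> j < M \<and> j - i \<ge> 2 \<and> \<not> (i = 0 \<and> j = M - 1))"

definition ptolemy_poly :: "nat \<Rightarrow> (nat \<times> nat) set \<Rightarrow> bool" where
  "ptolemy_poly M D \<longleftrightarrow> (\<forall>d \<in> D. is_diagonal M d) \<and>
     (\<forall>i j k l. (i, j) \<in> D \<and> (k, l) \<in> D \<and> crosses (i, j) (k, l) \<longrightarrow>
        (\<forall>x \<in> {i, j, k, l}. \<forall>y \<in> {i, j, k, l}. is_diagonal M (x, y) \<longrightarrow> (x, y) \<in> D))"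

text \<open>Ptolemy diagrams with distinguished base edge on the (N+1)-gon, labelled by V (|V| = N).
  Canonical representation: the (N+1)-gon has vertices 0..N counterclockwise, the base
  vertex is 0 and the base edge is {0,1}; the list ls labels vertex k (1 \<le> k \<le> N) by ls!(k-1).
  For N = 1 the only diagram is the degenerate one (no diagonals).\<close>
definition P_struct :: "'a set \<Rightarrow> ((nat \<times> nat) set \<times> 'a list) set" where
  "P_struct V = {(D, ls). distinct ls \<and> set ls = V \<and> ls \<noteq> [] \<and> ptolemy_poly (length ls + 1) D}"

text \<open>(C o P)[U]: cyclically ordered tuples of P-structures on the blocks of a set partition of U,
  represented as rotation orbits of lists.\<close>
definition CP_valid :: "'a set \<Rightarrow> ((nat \<times> nat) set \<times> 'a list) list \<Rightarrow> bool" where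
  "CP_valid U ps \<longleftrightarrow> ps \<noteq> [] \<and> (\<forall>p \<in> set ps. p \<in> P_struct (set (snd p))) \<and>
     distinct (concat (map snd ps)) \<and> set (concat (map snd ps)) = U"

definition CP_struct :: "'a set \<Rightarrow> ((nat \<times> nat) set \<times> 'a list) list set set" where
  "CP_struct U = {{rotate k ps | k. True} | ps. CP_valid U ps}"

definition CP_pointed :: "'a set \<Rightarrow> (((nat \<times> nat) set \<times> 'a list) list set \<times> 'a) set" where
  "CP_pointed U = CP_struct U \<times> U"

definition periodic_pairs :: "'a set \<Rightarrow> ((int \<times> int) set \<times> (int set \<Rightarrow> 'a)) set" where
  "periodic_pairs U = {(X, lam).
     periodic_arcs (int (card U)) X \<and> ptolemy_inf X \<and>
     (\<forall>a \<in> X. arc_length a \<le> int (card U)) \<and>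
     lam \<in> zmod_classes (int (card U)) \<rightarrow>\<^sub>E U \<and>
     bij_betw lam (zmod_classes (int (card U))) U}"

end

theory Submission
  imports Defs
begin


definition cov :: "(int \<times> int) set \<Rightarrow> int \<Rightarrow> bool" where
  "cov X v \<longleftrightarrow> (\<exists>a b. (a,b) \<in> X \<and> a < v \<and> v < b)"

lemma ptolemy_infD:
  assumes "ptolemy_inf X" "(i,j) \<in> X" "(r,s) \<in> X" "i < r" "r < j" "j < s"
  shows "(i,s) \<in> X" "r - i \<ge> 2 \<Longrightarrow> (i,r) \<in> X" "j - r \<ge> 2 \<Longrightarrow> (r,j) \<in> X"
        "s - j \<ge> 2 \<Longrightarrow> (j,s) \<in> X"
proof -
  have cr: "crosses (i,j) (r,s)" using assms unfolding crosses_def by auto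
  have H: "\<forall>b \<in> {(i, r), (i, s), (r, j), (j, s)}. is_arc b \<longrightarrow> b \<in> X"
  proof -
    have "\<forall>i j r s. (i, j) \<in> X \<and> (r, s) \<in> X \<and> crosses (i, j) (r, s) \<and> i < r \<longrightarrow>
        (\<forall>b \<in> {(i, r), (i, s), (r, j), (j, s)}. is_arc b \<longrightarrow> b \<in> X)"
      using assms(1) unfolding ptolemy_inf_def by (elim conjE)
    then show ?thesis using cr assms(2-4) by presburger
  qed
  show "(i,s) \<in> X" using H assms unfolding is_arc_def by auto
  show "r - i \<ge> 2 \<Longrightarrow> (i,r) \<in> X" using H unfolding is_arc_def by auto
  show "j - r \<ge> 2 \<Longrightarrow> (r,j) \<in> X" using H unfolding is_arc_def by auto
  show "s - j \<ge> 2 \<Longrightarrow> (j,s) \<in> X" using H unfolding is_arc_def by auto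
qed

lemma ptolemy_inf_arc: "ptolemy_inf X \<Longrightarrow> (a,b) \<in> X \<Longrightarrow> b - a \<ge> 2"
proof -
  assume "ptolemy_inf X" "(a,b) \<in> X"
  then have "is_arc (a,b)" unfolding ptolemy_inf_def by (elim conjE) blast
  then show ?thesis unfolding is_arc_def by simp
qed

lemma ptolemy_infI:
  assumes "\<And>a b. (a,b) \<in> X \<Longrightarrow> b - a \<ge> 2"
    and "\<And>i j r s. (i,j) \<in> X \<Longrightarrow> (r,s) \<in> X \<Longrightarrow> i < r \<Longrightarrow> r < j \<Longrightarrow> j < s \<Longrightarrow>
      (i,s) \<in> X \<and> (r - i \<ge> 2 \<longrightarrow> (i,r) \<in> X) \<and> (j - r \<ge> 2 \<longrightarrow> (r,j) \<in> X) \<and> (s - j \<ge> 2 \<longrightarrow> (j,s) \<in> X)"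
  shows "ptolemy_inf X"
  unfolding ptolemy_inf_def
proof (intro conjI allI impI ballI)
  fix a assume "a \<in> X" then show "is_arc a" using assms(1) unfolding is_arc_def
    by (metis prod.collapse)
next
  fix i j r s b
  assume h: "(i, j) \<in> X \<and> (r, s) \<in> X \<and> crosses (i, j) (r, s) \<and> i < r"
    and b: "b \<in> {(i, r), (i, s), (r, j), (j, s)}" and ab: "is_arc b"
  from h have "r < j" "j < s" unfolding crosses_def by auto
  with h assms(2)[of i j r s] have "(i,s) \<in> X \<and> (r - i \<ge> 2 \<longrightarrow> (i,r) \<in> X) \<and> (j - r \<ge> 2 \<longrightarrow> (r,j) \<in> X) \<and> (s - j \<ge> 2 \<longrightarrow> (j,s) \<in> X)"
    by blast
  with b ab show "b \<in> X" unfolding is_arc_def by (elim insertE) auto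
qed

lemma exists_uncov:
  assumes P: "ptolemy_inf X" and L: "\<forall>a\<in>X. arc_length a \<le> int n"
  shows "\<exists>v. \<not> cov X v"
proof (cases "X = {}")
  case True then show ?thesis unfolding cov_def by auto
next
  case False
  have fin: "finite (arc_length ` X)"
  proof (rule finite_subset)
    show "arc_length ` X \<subseteq> {0..int n}" using L P unfolding arc_length_def
      by (force dest: ptolemy_inf_arc)
  qed auto
  define l where "l = Max (arc_length ` X)"
  have "l \<in> arc_length ` X" unfolding l_def using fin False by auto
  then obtain a b where ab: "(a,b) \<in> X" "b - a = l" unfolding arc_length_def by auto
  have mx: "\<And>p q. (p,q) \<in> X \<Longrightarrow> q - p \<le> l"
    unfolding l_def using fin by (metis Max_ge arc_length_def fst_conv image_eqI snd_conv)
  have "\<not> cov X b"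
  proof
    assume "cov X b"
    then obtain p q where pq: "(p,q) \<in> X" "p < b" "b < q" unfolding cov_def by auto
    show False
    proof (cases "p \<le> a")
      case True then show ?thesis using mx[OF pq(1)] ab pq by auto
    next
      case False
      have "a < b" using ptolemy_inf_arc[OF P ab(1)] by auto
      have "(a,q) \<in> X" using ptolemy_infD(1)[OF P ab(1) pq(1)] False pq by auto
      then show ?thesis using mx[of a q] ab pq by auto
    qed
  qed
  then show ?thesis by blast
qed

lemma first_block_arc:
  assumes P: "ptolemy_inf Y" and nn: "\<forall>(a,b)\<in>Y. 0 \<le> a"
    and N: "\<not> cov Y N" and N2: "N \<ge> 2" and c: "\<And>v. 0 < v \<Longrightarrow> v < N \<Longrightarrow> cov Y v"
  shows "(0,N) \<in> Y"
proof -
  have "cov Y 1" using c N2 by auto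
  then obtain a0 b0 where ab0: "(a0,b0) \<in> Y" "a0 < 1" "1 < b0" unfolding cov_def by auto
  have a00: "a0 = 0" using ab0 nn by auto
  have bnd: "\<And>p q. (p,q) \<in> Y \<Longrightarrow> p < N \<Longrightarrow> q \<le> N"
  proof (rule ccontr)
    fix p q assume "(p,q) \<in> Y" "p < N" "\<not> q \<le> N"
    then show False using N unfolding cov_def by (meson not_le)
  qed
  define S where "S = {b. (0,b) \<in> Y}"
  have "S \<subseteq> {0..N}" using bnd N2 ptolemy_inf_arc[OF P] by (fastforce simp: S_def)
  then have finS: "finite S" using finite_subset by blast
  have "b0 \<in> S" using ab0 a00 by (auto simp: S_def)
  define b where "b = Max S"
  have "b \<in> S" unfolding b_def using finS \<open>b0 \<in> S\<close> by (intro Max_in) auto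
  then have bS: "(0,b) \<in> Y" by (simp add: S_def)
  have bmax: "\<And>q. (0,q) \<in> Y \<Longrightarrow> q \<le> b" unfolding b_def using finS by (simp add: S_def)
  have bN: "b \<le> N" using bnd[OF bS] N2 by auto
  have b2: "b \<ge> 2" using ptolemy_inf_arc[OF P bS] by auto
  have "b = N"
  proof (rule ccontr)
    assume "b \<noteq> N"
    then have "cov Y b" using c bN b2 by auto
    then obtain p q where pq: "(p,q) \<in> Y" "p < b" "b < q" unfolding cov_def by auto
    have "p \<ge> 0" using nn pq by auto
    show False
    proof (cases "p = 0")
      case True then show ?thesis using bmax pq by fastforce
    next
      case False
      then have "(0,q) \<in> Y" using ptolemy_infD(1)[OF P bS pq(1)] pq \<open>p \<ge> 0\<close> by auto
      then show ?thesis using bmax pq by fastforce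
    qed
  qed
  then show ?thesis using bS by simp
qed

definition shift :: "int \<Rightarrow> (int \<times> int) set \<Rightarrow> (int \<times> int) set" where
  "shift d X = (\<lambda>(a,b). (a+d, b+d)) ` X"

lemma shift_mem[simp]: "(a,b) \<in> shift d X \<longleftrightarrow> (a-d, b-d) \<in> X"
proof
  assume "(a,b) \<in> shift d X"
  then obtain p q where "(p,q)\<in>X" "(a,b) = (p+d,q+d)" unfolding shift_def by auto
  then show "(a-d,b-d)\<in>X" by simp
next
  assume h: "(a-d,b-d)\<in>X"
  have "(\<lambda>(a,b). (a+d, b+d)) (a-d,b-d) \<in> (\<lambda>(a,b). (a+d, b+d)) ` X" using h by (rule imageI)
  then show "(a,b) \<in> shift d X" unfolding shift_def by simp
qed

lemma shift_0[simp]: "shift 0 X = X"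
  by (rule set_eqI) (case_tac x, simp)

lemma shift_shift[simp]: "shift d (shift e X) = shift (d+e) X"
  by (rule set_eqI) (case_tac x, simp add: algebra_simps)

lemma shift_inj: "shift d X = shift d Z \<Longrightarrow> X = Z"
  by (metis add.commute add.right_inverse shift_0 shift_shift)

lemma cov_shift: "cov (shift d X) v \<longleftrightarrow> cov X (v - d)"
  unfolding cov_def
proof
  assume "\<exists>a b. (a,b) \<in> shift d X \<and> a<v \<and> v<b"
  then obtain a b where "(a-d,b-d)\<in>X" "a<v" "v<b" by auto
  then show "\<exists>a b. (a,b)\<in>X \<and> a < v-d \<and> v-d<b" by (intro exI[of _ "a-d"] exI[of _ "b-d"]) auto
next
  assume "\<exists>a b. (a,b)\<in>X \<and> a < v-d \<and> v-d<b"
  then obtain a b where "(a,b)\<in>X" "a < v-d" "v-d<b" by auto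
  then show "\<exists>a b. (a,b) \<in> shift d X \<and> a<v \<and> v<b" by (intro exI[of _ "a+d"] exI[of _ "b+d"]) auto
qed

lemma ptolemy_inf_shift:
  assumes P: "ptolemy_inf X" shows "ptolemy_inf (shift d X)"
proof (rule ptolemy_infI)
  fix a b assume "(a,b) \<in> shift d X"
  then show "b - a \<ge> 2" using ptolemy_inf_arc[OF P, of "a-d" "b-d"] by simp
next
  fix i j r s assume h: "(i,j) \<in> shift d X" "(r,s) \<in> shift d X" "i < r" "r < j" "j < s"
  then have h': "(i-d,j-d) \<in> X" "(r-d,s-d) \<in> X" "i-d < r-d" "r-d < j-d" "j-d < s-d" by auto
  note D = ptolemy_infD[OF P h']
  show "(i,s) \<in> shift d X \<and> (r - i \<ge> 2 \<longrightarrow> (i,r) \<in> shift d X) \<and> (j - r \<ge> 2 \<longrightarrow> (r,j) \<in> shift d X) \<and> (s - j \<ge> 2 \<longrightarrow> (j,s) \<in> shift d X)"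
    using D by simp
qed

lemma ptolemy_inf_union:
  assumes PA: "ptolemy_inf A" and PB: "ptolemy_inf B"
    and A: "\<And>a b. (a,b) \<in> A \<Longrightarrow> b \<le> N" and B: "\<And>a b. (a,b) \<in> B \<Longrightarrow> N \<le> a"
  shows "ptolemy_inf (A \<union> B)"
proof (rule ptolemy_infI)
  fix a b assume "(a,b) \<in> A \<union> B"
  then show "b - a \<ge> 2" using ptolemy_inf_arc[OF PA] ptolemy_inf_arc[OF PB] by blast
next
  fix i j r s assume h: "(i,j) \<in> A \<union> B" "(r,s) \<in> A \<union> B" "i < r" "r < j" "j < s"
  consider "(i,j) \<in> A" "(r,s) \<in> A" | "(i,j) \<in> B" "(r,s) \<in> B"
  proof -
    { assume "(i,j) \<in> A" "(r,s) \<in> B" then have False using A B h by force }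
    moreover
    { assume "(i,j) \<in> B" "(r,s) \<in> A" then have False using A B h by force }
    ultimately show ?thesis using h that by blast
  qed
  then show "(i,s) \<in> A \<union> B \<and> (r - i \<ge> 2 \<longrightarrow> (i,r) \<in> A \<union> B) \<and> (j - r \<ge> 2 \<longrightarrow> (r,j) \<in> A \<union> B) \<and> (s - j \<ge> 2 \<longrightarrow> (j,s) \<in> A \<union> B)"
  proof cases
    case 1 note D = ptolemy_infD[OF PA 1 h(3-5)] then show ?thesis by blast
  next
    case 2 note D = ptolemy_infD[OF PB 2 h(3-5)] then show ?thesis by blast
  qed
qed

lemma ptolemy_inf_restr_ge:
  assumes P: "ptolemy_inf Y" shows "ptolemy_inf {p \<in> Y. N \<le> fst p}"
proof (rule ptolemy_infI)
  fix a b assume "(a,b) \<in> {p \<in> Y. N \<le> fst p}"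
  then show "b - a \<ge> 2" using ptolemy_inf_arc[OF P] by blast
next
  fix i j r s assume h: "(i,j) \<in> {p \<in> Y. N \<le> fst p}" "(r,s) \<in> {p \<in> Y. N \<le> fst p}" "i < r" "r < j" "j < s"
  then have h': "(i,j) \<in> Y" "(r,s) \<in> Y" "N \<le> i" by auto
  note D = ptolemy_infD[OF P h'(1,2) h(3-5)]
  show "(i,s) \<in> {p \<in> Y. N \<le> fst p} \<and> (r - i \<ge> 2 \<longrightarrow> (i,r) \<in> {p \<in> Y. N \<le> fst p}) \<and> (j - r \<ge> 2 \<longrightarrow> (r,j) \<in> {p \<in> Y. N \<le> fst p}) \<and> (s - j \<ge> 2 \<longrightarrow> (j,s) \<in> {p \<in> Y. N \<le> fst p})"
    using D h h' by auto
qed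

lemma poly_cross:
  assumes "ptolemy_poly M D" "(i,j)\<in>D" "(k,l)\<in>D" "i<k" "k<j" "j<l"
    "x \<in> {i,j,k,l}" "y \<in> {i,j,k,l}" "is_diagonal M (x,y)"
  shows "(x,y)\<in>D"
proof -
  have "crosses (i,j) (k,l)" using assms unfolding crosses_def by auto
  moreover have "\<forall>i j k l. (i, j) \<in> D \<and> (k, l) \<in> D \<and> crosses (i, j) (k, l) \<longrightarrow>
        (\<forall>x \<in> {i, j, k, l}. \<forall>y \<in> {i, j, k, l}. is_diagonal M (x, y) \<longrightarrow> (x, y) \<in> D)"
    using assms(1) unfolding ptolemy_poly_def by (elim conjE)
  ultimately show ?thesis using assms(2,3,7,8,9) by blast
qed

lemma poly_diag: "ptolemy_poly M D \<Longrightarrow> d \<in> D \<Longrightarrow> is_diagonal M d"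
proof -
  assume "ptolemy_poly M D" "d \<in> D"
  moreover have "ptolemy_poly M D \<Longrightarrow> \<forall>d \<in> D. is_diagonal M d" unfolding ptolemy_poly_def by (elim conjE)
  ultimately show ?thesis by blast
qed

definition pc :: "(nat \<times> nat) set \<Rightarrow> nat \<Rightarrow> (int \<times> int) set" where
  "pc D N = (\<lambda>(a,b). (int a, int b)) ` D \<union> (if N \<ge> 2 then {(0, int N)} else {})"

lemma pc_mem: "(a,b) \<in> pc D N \<longleftrightarrow> (0 \<le> a \<and> 0 \<le> b \<and> (nat a, nat b) \<in> D) \<or> (a = 0 \<and> b = int N \<and> N \<ge> 2)"
proof
  assume "(a,b) \<in> pc D N"
  then consider "(a,b) \<in> (\<lambda>(a,b). (int a, int b)) ` D" | "N \<ge> 2" "(a,b) = (0, int N)"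
  proof -
    have "(a,b) \<in> (\<lambda>(a,b). (int a, int b)) ` D \<or> (N \<ge> 2 \<and> (a,b) = (0, int N))"
      using \<open>(a,b) \<in> pc D N\<close> unfolding pc_def by (simp split: if_splits)
    then show ?thesis using that by blast
  qed
  then show "(0 \<le> a \<and> 0 \<le> b \<and> (nat a, nat b) \<in> D) \<or> (a = 0 \<and> b = int N \<and> N \<ge> 2)"
  proof cases
    case 1
    then obtain p q where "(p,q) \<in> D" "a = int p" "b = int q" by auto
    then show ?thesis by simp
  qed simp
next
  assume "(0 \<le> a \<and> 0 \<le> b \<and> (nat a, nat b) \<in> D) \<or> (a = 0 \<and> b = int N \<and> N \<ge> 2)"
  then show "(a,b) \<in> pc D N"
  proof
    assume h: "0 \<le> a \<and> 0 \<le> b \<and> (nat a, nat b) \<in> D"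
    have "(\<lambda>(a,b). (int a, int b)) (nat a, nat b) \<in> (\<lambda>(a,b). (int a, int b)) ` D"
      using h by (intro imageI) simp
    then show ?thesis using h unfolding pc_def by simp
  qed (simp add: pc_def)
qed

lemma is_diagonal_iff: "is_diagonal (N+1) (x,y) \<longleftrightarrow> x < y \<and> y \<le> N \<and> y - x \<ge> 2 \<and> \<not> (x = 0 \<and> y = N)"
  unfolding is_diagonal_def by auto

lemma pc_bounds:
  assumes "ptolemy_poly (N+1) D" "(a,b) \<in> pc D N"
  shows "0 \<le> a" "b \<le> int N" "a + 2 \<le> b" "\<not> (a = 0 \<and> b = int N) \<Longrightarrow> (nat a, nat b) \<in> D"
proof -
  have "(0 \<le> a \<and> 0 \<le> b \<and> (nat a, nat b) \<in> D) \<or> (a = 0 \<and> b = int N \<and> N \<ge> 2)" using assms(2) pc_mem by blast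
  then consider "0 \<le> a" "0 \<le> b" "(nat a, nat b) \<in> D" | "a = 0" "b = int N" "N \<ge> 2" by blast
  then have "0 \<le> a \<and> b \<le> int N \<and> a + 2 \<le> b \<and> (\<not> (a = 0 \<and> b = int N) \<longrightarrow> (nat a, nat b) \<in> D)"
  proof cases
    case 1
    then have "is_diagonal (N+1) (nat a, nat b)" using poly_diag assms(1) by blast
    then show ?thesis using 1 unfolding is_diagonal_iff by auto
  qed auto
  then show "0 \<le> a" "b \<le> int N" "a + 2 \<le> b" "\<not> (a = 0 \<and> b = int N) \<Longrightarrow> (nat a, nat b) \<in> D" by auto
qed

lemma pc_ptolemy:
  assumes P: "ptolemy_poly (N+1) D" shows "ptolemy_inf (pc D N)"
proof (rule ptolemy_infI)
  fix a b assume "(a,b) \<in> pc D N" then show "b - a \<ge> 2" using pc_bounds[OF P] by force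
next
  fix i j r s assume h: "(i,j) \<in> pc D N" "(r,s) \<in> pc D N" "i < r" "r < j" "j < s"
  note b1 = pc_bounds[OF P h(1)] and b2 = pc_bounds[OF P h(2)]
  have n1: "\<not> (i = 0 \<and> j = int N)" using b2 h by auto
  have n2: "\<not> (r = 0 \<and> s = int N)" using b1 h by auto
  have d1: "(nat i, nat j) \<in> D" using b1(4) n1 by blast
  have d2: "(nat r, nat s) \<in> D" using b2(4) n2 by blast
  have key: "(x,y) \<in> pc D N" if "x \<in> {i,j,r,s}" "y \<in> {i,j,r,s}" "x < y" "y - x \<ge> 2" for x y
  proof (cases "x = 0 \<and> y = int N")
    case True then show ?thesis using that unfolding pc_mem by auto
  next
    case False
    have xy: "0 \<le> x" "y \<le> int N" using that b1 b2 h by auto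
    have "is_diagonal (N+1) (nat x, nat y)" unfolding is_diagonal_iff using xy that False by auto
    moreover have "nat x \<in> {nat i, nat j, nat r, nat s}" "nat y \<in> {nat i, nat j, nat r, nat s}" using that by auto
    moreover have "nat i < nat r" "nat r < nat j" "nat j < nat s" using h b1 by auto
    ultimately have "(nat x, nat y) \<in> D" using poly_cross[OF P d1 d2] by blast
    then show ?thesis unfolding pc_mem using xy that by auto
  qed
  show "(i,s) \<in> pc D N \<and> (r - i \<ge> 2 \<longrightarrow> (i,r) \<in> pc D N) \<and> (j - r \<ge> 2 \<longrightarrow> (r,j) \<in> pc D N) \<and> (s - j \<ge> 2 \<longrightarrow> (j,s) \<in> pc D N)"
  proof (intro conjI impI)
    show "(i,s) \<in> pc D N" using key[of i s] h by simp
    show "(i,r) \<in> pc D N" if "r - i \<ge> 2" using key[of i r] h that by simp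
    show "(r,j) \<in> pc D N" if "j - r \<ge> 2" using key[of r j] h that by simp
    show "(j,s) \<in> pc D N" if "s - j \<ge> 2" using key[of j s] h that by simp
  qed
qed


definition inside :: "nat \<Rightarrow> (int \<times> int) set \<Rightarrow> bool" where
  "inside m Y \<longleftrightarrow> (\<forall>a b. (a,b) \<in> Y \<longrightarrow> 0 \<le> a \<and> b \<le> int m)"

definition LIN :: "nat \<Rightarrow> (int \<times> int) set set" where
  "LIN m = {Y. inside m Y \<and> ptolemy_inf Y}"

definition Qs :: "nat \<Rightarrow> ((nat \<times> nat) set \<times> nat) list set" where
  "Qs m = {qs. (\<forall>p\<in>set qs. snd p \<ge> 1 \<and> ptolemy_poly (snd p + 1) (fst p)) \<and> sum_list (map snd qs) = m}"

fun glue :: "((nat \<times> nat) set \<times> nat) list \<Rightarrow> (int \<times> int) set" where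
  "glue [] = {}"
| "glue (p # qs) = pc (fst p) (snd p) \<union> shift (int (snd p)) (glue qs)"

lemma ptolemy_inf_empty: "ptolemy_inf {}"
  by (rule ptolemy_infI) auto

lemma Qs_Cons: "p # qs \<in> Qs m \<longleftrightarrow> snd p \<ge> 1 \<and> ptolemy_poly (snd p + 1) (fst p) \<and> snd p \<le> m \<and> qs \<in> Qs (m - snd p)"
  unfolding Qs_def by auto

lemma Qs_Nil: "[] \<in> Qs m \<longleftrightarrow> m = 0" unfolding Qs_def by auto

lemma Qs_0: "qs \<in> Qs 0 \<Longrightarrow> qs = []"
  unfolding Qs_def by (cases qs) auto

lemma glue_LIN: "qs \<in> Qs m \<Longrightarrow> glue qs \<in> LIN m"
proof (induction qs arbitrary: m)
  case Nil then show ?case by (simp add: LIN_def inside_def ptolemy_inf_empty)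
next
  case (Cons p qs)
  obtain D N where p: "p = (D,N)" by fastforce
  from Cons.prems have h: "N \<ge> 1" "ptolemy_poly (N+1) D" "N \<le> m" "qs \<in> Qs (m - N)"
    unfolding Qs_Cons p by auto
  have IH: "glue qs \<in> LIN (m - N)" using Cons.IH h(4) .
  then have ins: "inside (m-N) (glue qs)" and P: "ptolemy_inf (glue qs)" unfolding LIN_def by auto
  have "ptolemy_inf (pc D N \<union> shift (int N) (glue qs))"
  proof (rule ptolemy_inf_union[where N="int N"])
    show "ptolemy_inf (pc D N)" using pc_ptolemy[OF h(2)] .
    show "ptolemy_inf (shift (int N) (glue qs))" using ptolemy_inf_shift[OF P] .
    show "\<And>a b. (a,b) \<in> pc D N \<Longrightarrow> b \<le> int N" using pc_bounds[OF h(2)] by blast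
    show "\<And>a b. (a,b) \<in> shift (int N) (glue qs) \<Longrightarrow> int N \<le> a" using ins unfolding inside_def by force
  qed
  moreover have "inside m (pc D N \<union> shift (int N) (glue qs))"
    unfolding inside_def
  proof (intro allI impI)
    fix a b assume "(a,b) \<in> pc D N \<union> shift (int N) (glue qs)"
    then show "0 \<le> a \<and> b \<le> int m"
    proof
      assume "(a,b) \<in> pc D N" then show ?thesis using pc_bounds[OF h(2)] h(3) by force
    next
      assume "(a,b) \<in> shift (int N) (glue qs)"
      then have "(a - int N, b - int N) \<in> glue qs" by simp
      then show ?thesis using ins h(3) unfolding inside_def by force
    qed
  qed
  ultimately show ?case unfolding LIN_def p by simp
qed

lemma inside_uncov0: "inside m Y \<Longrightarrow> \<not> cov Y 0"
  unfolding inside_def cov_def by force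

lemma glue_Cons_uncov:
  assumes "(D,N) # qs \<in> Qs m" shows "\<not> cov (glue ((D,N) # qs)) (int N)"
proof
  from assms have h: "N \<ge> 1" "ptolemy_poly (N+1) D" "N \<le> m" "qs \<in> Qs (m - N)"
    unfolding Qs_Cons by auto
  have ins: "inside (m-N) (glue qs)" using glue_LIN[OF h(4)] unfolding LIN_def by auto
  assume "cov (glue ((D,N) # qs)) (int N)"
  then obtain a b where ab: "(a,b) \<in> pc D N \<union> shift (int N) (glue qs)" "a < int N" "int N < b"
    unfolding cov_def by auto
  show False
  proof (cases "(a,b) \<in> pc D N")
    case True then show ?thesis using pc_bounds[OF h(2)] ab by force
  next
    case False then have "(a - int N, b - int N) \<in> glue qs" using ab by simp
    then show ?thesis using ins ab unfolding inside_def by force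
  qed
qed

lemma glue_Cons_arc:
  "N \<ge> 2 \<Longrightarrow> (0, int N) \<in> glue ((D,N) # qs)"
  by (simp add: pc_mem)

lemma glue_Cons_low:
  assumes "(D,N) # qs \<in> Qs m"
  shows "{p \<in> glue ((D,N) # qs). snd p \<le> int N} = pc D N"
    and "{p \<in> glue ((D,N) # qs). int N \<le> fst p} = shift (int N) (glue qs)"
proof -
  from assms have h: "N \<ge> 1" "ptolemy_poly (N+1) D" "N \<le> m" "qs \<in> Qs (m - N)"
    unfolding Qs_Cons by auto
  have G: "glue qs \<in> LIN (m-N)" using glue_LIN[OF h(4)] .
  then have ins: "inside (m-N) (glue qs)" unfolding LIN_def by auto
  have P: "ptolemy_inf (glue qs)" using G unfolding LIN_def by auto
  have s1: "int N + 2 \<le> b" if "(a,b) \<in> shift (int N) (glue qs)" for a b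
  proof -
    have "(a - int N, b - int N) \<in> glue qs" using that by simp
    then show ?thesis using ins ptolemy_inf_arc[OF P] unfolding inside_def by force
  qed
  have s2: "a < int N" if "(a,b) \<in> pc D N" for a b
    using pc_bounds[OF h(2) that] by auto
  show "{p \<in> glue ((D,N) # qs). snd p \<le> int N} = pc D N"
  proof (rule set_eqI)
    fix x show "x \<in> {p \<in> glue ((D,N) # qs). snd p \<le> int N} \<longleftrightarrow> x \<in> pc D N"
      using s1 pc_bounds[OF h(2)] by (cases x) fastforce
  qed
  show "{p \<in> glue ((D,N) # qs). int N \<le> fst p} = shift (int N) (glue qs)"
  proof (rule set_eqI)
    fix x show "x \<in> {p \<in> glue ((D,N) # qs). int N \<le> fst p} \<longleftrightarrow> x \<in> shift (int N) (glue qs)"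
      using s2 ins unfolding inside_def by (cases x) force
  qed
qed


lemma pc_inj:
  assumes P: "ptolemy_poly (N+1) D" and P': "ptolemy_poly (N+1) D'" and E: "pc D N = pc D' N"
  shows "D = D'"
proof -
  have *: "(x,y) \<in> B" if Q: "ptolemy_poly (N+1) A" "ptolemy_poly (N+1) B" "pc A N = pc B N" "(x,y) \<in> A" for A B x y
  proof -
    have dg: "is_diagonal (N+1) (x,y)" using poly_diag[OF Q(1) Q(4)] .
    have "(int x, int y) \<in> pc A N" using Q(4) by (simp add: pc_mem)
    then have "(int x, int y) \<in> pc B N" using Q(3) by simp
    then show ?thesis using dg unfolding pc_mem is_diagonal_iff by auto
  qed
  show ?thesis
  proof (rule set_eqI)
    fix z show "z \<in> D \<longleftrightarrow> z \<in> D'" using *[OF P P' E] *[OF P' P E[symmetric]] by (cases z) blast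
  qed
qed

lemma glue_inj: "qs \<in> Qs m \<Longrightarrow> qs' \<in> Qs m \<Longrightarrow> glue qs = glue qs' \<Longrightarrow> qs = qs'"
proof (induction qs arbitrary: qs' m)
  case Nil
  then have "m = 0" by (simp add: Qs_Nil)
  then show ?case using Nil Qs_0 by auto
next
  case (Cons p qs)
  obtain D N where p: "p = (D,N)" by fastforce
  from Cons.prems(1) have h: "N \<ge> 1" "ptolemy_poly (N+1) D" "N \<le> m" "qs \<in> Qs (m - N)"
    unfolding Qs_Cons p by auto
  obtain D' N' qs2 where q': "qs' = (D',N') # qs2"
  proof (cases qs')
    case Nil then show ?thesis using Cons.prems(2) h Qs_Nil by auto
  next
    case (Cons a list) then show ?thesis using that by (cases a) auto
  qed
  from Cons.prems(2) have h': "N' \<ge> 1" "ptolemy_poly (N'+1) D'" "N' \<le> m" "qs2 \<in> Qs (m - N')"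
    unfolding Qs_Cons q' by auto
  have E: "glue ((D,N) # qs) = glue ((D',N') # qs2)" using Cons.prems(3) p q' by simp
  have u1: "\<not> cov (glue ((D,N) # qs)) (int N)" using glue_Cons_uncov Cons.prems(1) p by blast
  have u2: "\<not> cov (glue ((D',N') # qs2)) (int N')" using glue_Cons_uncov Cons.prems(2) q' by blast
  have NN: "N = N'"
  proof (rule ccontr)
    assume "N \<noteq> N'"
    then consider "N < N'" | "N' < N" by linarith
    then show False
    proof cases
      case 1
      then have "(0, int N') \<in> glue ((D,N) # qs)" using E glue_Cons_arc[of N' D' qs2] h by simp
      then have "cov (glue ((D,N) # qs)) (int N)" unfolding cov_def using 1 h
        by (intro exI[of _ 0] exI[of _ "int N'"]) simp
      then show False using u1 by simp
    next
      case 2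
      then have "(0, int N) \<in> glue ((D',N') # qs2)" using E glue_Cons_arc[of N D qs] h' by simp
      then have "cov (glue ((D',N') # qs2)) (int N')" unfolding cov_def using 2 h'
        by (intro exI[of _ 0] exI[of _ "int N"]) simp
      then show False using u2 by simp
    qed
  qed
  have "pc D N = pc D' N"
    using glue_Cons_low(1)[OF Cons.prems(1)[unfolded p]] glue_Cons_low(1)[OF Cons.prems(2)[unfolded q']] E NN by (simp del: glue.simps)
  then have DD: "D = D'" using pc_inj h(2) h'(2) NN by blast
  have "shift (int N) (glue qs) = shift (int N) (glue qs2)"
    using glue_Cons_low(2)[OF Cons.prems(1)[unfolded p]] glue_Cons_low(2)[OF Cons.prems(2)[unfolded q']] E NN by (simp del: glue.simps)
  then have "glue qs = glue qs2" by (rule shift_inj)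
  then have "qs = qs2" using Cons.IH h(4) h'(4) NN by blast
  then show ?case using p q' NN DD by simp
qed


lemma glue_surj: "Y \<in> LIN m \<Longrightarrow> \<exists>qs \<in> Qs m. glue qs = Y"
proof (induction m arbitrary: Y rule: less_induct)
  case (less m)
  have ins: "inside m Y" and P: "ptolemy_inf Y" using less.prems unfolding LIN_def by auto
  show ?case
  proof (cases "m = 0")
    case True
    have "Y = {}"
    proof (rule ccontr)
      assume "Y \<noteq> {}" then obtain a b where "(a,b) \<in> Y" by auto
      then show False using ins ptolemy_inf_arc[OF P] True unfolding inside_def by force
    qed
    then show ?thesis using True by (intro bexI[of _ "[]"]) (auto simp: Qs_Nil)
  next
    case False
    have um: "\<not> cov Y (int m)" using ins unfolding inside_def cov_def by force
    define N where "N = (LEAST N::nat. 0 < N \<and> \<not> cov Y (int N))"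
    have Nex: "0 < m \<and> \<not> cov Y (int m)" using um False by auto
    have N0: "0 < N" and uN: "\<not> cov Y (int N)" using LeastI[of "\<lambda>N. 0 < N \<and> \<not> cov Y (int N)", OF Nex]
      unfolding N_def by auto
    have Nm: "N \<le> m" unfolding N_def using Nex by (rule Least_le)
    have cv: "cov Y v" if "0 < v" "v < int N" for v
    proof -
      have "nat v < N" "0 < nat v" using that by auto
      then have "\<not> (0 < nat v \<and> \<not> cov Y (int (nat v)))"
        using not_less_Least[of "nat v" "\<lambda>N. 0 < N \<and> \<not> cov Y (int N)"] unfolding N_def by blast
      then show ?thesis using that by auto
    qed
    have nn: "\<forall>(a,b)\<in>Y. 0 \<le> a" using ins unfolding inside_def by auto
    have arcN: "(0, int N) \<in> Y" if "N \<ge> 2"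
      using first_block_arc[OF P nn uN _ cv] that by auto
    have split: "snd p \<le> int N \<or> int N \<le> fst p" if "p \<in> Y" for p
    proof (rule ccontr)
      assume "\<not> (snd p \<le> int N \<or> int N \<le> fst p)"
      then have "cov Y (int N)" using that unfolding cov_def
        by (intro exI[of _ "fst p"] exI[of _ "snd p"]) auto
      then show False using uN by simp
    qed
    define D where "D = {(x,y). (int x, int y) \<in> Y \<and> y \<le> N \<and> \<not> (x = 0 \<and> y = N)}"
    have Dmem: "(x,y) \<in> D \<longleftrightarrow> (int x, int y) \<in> Y \<and> y \<le> N \<and> \<not> (x = 0 \<and> y = N)" for x y
      unfolding D_def by simp
    have low: "{p \<in> Y. snd p \<le> int N} = pc D N"
    proof (rule set_eqI)
      fix p :: "int \<times> int"
      obtain a b where p: "p = (a,b)" by fastforce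
      show "p \<in> {p \<in> Y. snd p \<le> int N} \<longleftrightarrow> p \<in> pc D N"
      proof
        assume h: "p \<in> {p \<in> Y. snd p \<le> int N}"
        then have ab: "(a,b) \<in> Y" "b \<le> int N" using p by auto
        have a0: "0 \<le> a" and b0: "a + 2 \<le> b" using ab nn ptolemy_inf_arc[OF P ab(1)] by auto
        show "p \<in> pc D N"
        proof (cases "a = 0 \<and> b = int N")
          case True
          then have "N \<ge> 2" using b0 by auto
          then show ?thesis using True p by (simp add: pc_mem)
        next
          case False
          then have "(nat a, nat b) \<in> D" unfolding Dmem using ab a0 b0 by auto
          then show ?thesis using p a0 b0 by (simp add: pc_mem)
        qed
      next
        assume "p \<in> pc D N"
        then have "(0 \<le> a \<and> 0 \<le> b \<and> (nat a, nat b) \<in> D) \<or> (a = 0 \<and> b = int N \<and> N \<ge> 2)"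
          using p pc_mem by simp
        then show "p \<in> {p \<in> Y. snd p \<le> int N}"
        proof
          assume "0 \<le> a \<and> 0 \<le> b \<and> (nat a, nat b) \<in> D"
          then show ?thesis unfolding Dmem using p by auto
        next
          assume "a = 0 \<and> b = int N \<and> N \<ge> 2"
          then show ?thesis using arcN p by auto
        qed
      qed
    qed
    have PD: "ptolemy_poly (N+1) D"
      unfolding ptolemy_poly_def
    proof (intro conjI ballI allI impI)
      fix d assume "d \<in> D"
      then obtain x y where d: "d = (x,y)" "(int x, int y) \<in> Y" "y \<le> N" "\<not> (x = 0 \<and> y = N)"
        unfolding D_def by auto
      then have "int x + 2 \<le> int y" using ptolemy_inf_arc[OF P d(2)] by auto
      then show "is_diagonal (N+1) d" unfolding d is_diagonal_iff using d by auto
    next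
      fix i j k l x y
      assume h: "(i, j) \<in> D \<and> (k, l) \<in> D \<and> crosses (i, j) (k, l)"
        and x: "x \<in> {i, j, k, l}" and y: "y \<in> {i, j, k, l}" and dg: "is_diagonal (N + 1) (x, y)"
      have key: "(x,y) \<in> D" if A: "(i,j) \<in> D" "(k,l) \<in> D" "i<k" "k<j" "j<l"
        and x: "x \<in> {i, j, k, l}" and y: "y \<in> {i, j, k, l}" for i j k l
      proof -
        have Y1: "(int i, int j) \<in> Y" "(int k, int l) \<in> Y" using A unfolding Dmem by auto
        note PI = ptolemy_infD[OF P Y1, simplified]
        have "(int x, int y) \<in> Y" using x y dg A(3-5) PI Y1 unfolding is_diagonal_iff by auto
        then show ?thesis unfolding Dmem using dg unfolding is_diagonal_iff by auto
      qed
      from h have "i<k \<and> k<j \<and> j<l \<or> k<i \<and> i<l \<and> l<j" unfolding crosses_def by auto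
      then show "(x,y) \<in> D"
      proof
        assume "i<k \<and> k<j \<and> j<l" then show ?thesis using key[of i j k l] h x y by blast
      next
        assume "k<i \<and> i<l \<and> l<j" then show ?thesis using key[of k l i j] h x y by blast
      qed
    qed
    define Y' where "Y' = shift (- int N) {p \<in> Y. int N \<le> fst p}"
    have Y'L: "Y' \<in> LIN (m - N)"
      unfolding LIN_def
    proof (intro CollectI conjI)
      show "ptolemy_inf Y'" unfolding Y'_def by (intro ptolemy_inf_shift ptolemy_inf_restr_ge P)
      show "inside (m - N) Y'" unfolding inside_def Y'_def using ins Nm unfolding inside_def by force
    qed
    obtain qs' where qs': "qs' \<in> Qs (m - N)" "glue qs' = Y'" using less.IH[OF _ Y'L] N0 False by auto
    have "glue ((D,N) # qs') = pc D N \<union> {p \<in> Y. int N \<le> fst p}"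
      using qs' unfolding Y'_def by simp
    also have "\<dots> = Y" using low split by blast
    finally have "glue ((D,N) # qs') = Y" .
    moreover have "(D,N) # qs' \<in> Qs m" unfolding Qs_Cons using N0 PD Nm qs' by auto
    ultimately show ?thesis by blast
  qed
qed


definition per :: "nat \<Rightarrow> (int \<times> int) set \<Rightarrow> (int \<times> int) set" where
  "per n Y = (\<Union>t. shift (t * int n) Y)"

lemma per_mem: "(a,b) \<in> per n Y \<longleftrightarrow> (\<exists>t. (a - t * int n, b - t * int n) \<in> Y)"
  unfolding per_def by auto

definition PX :: "nat \<Rightarrow> (int \<times> int) set set" where
  "PX n = {X. periodic_arcs (int n) X \<and> ptolemy_inf X \<and> (\<forall>a\<in>X. arc_length a \<le> int n)}"

lemma periodicD: "periodic_arcs n X \<Longrightarrow> (i,j) \<in> X \<Longrightarrow> (i + t * n, j + t * n) \<in> X"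
  unfolding periodic_arcs_def by blast

lemma periodic_uncov: assumes "periodic_arcs n X" "\<not> cov X v" shows "\<not> cov X (v + t * n)"
proof
  assume "cov X (v + t * n)"
  then obtain a b where ab: "(a,b) \<in> X" "a < v + t*n" "v + t*n < b" unfolding cov_def by auto
  have "(a + (-t) * n, b + (-t) * n) \<in> X" using periodicD[OF assms(1) ab(1)] .
  then have "cov X v" unfolding cov_def using ab by (intro exI[of _ "a + (-t) * n"] exI[of _ "b + (-t) * n"]) (auto simp: algebra_simps)
  then show False using assms(2) by simp
qed

lemma mult_lt_imp: fixes n t u :: int assumes "0 < n" "t * n < u * n" shows "t < u"
  using assms by (simp add: mult_less_cancel_right)

lemma win: fixes t u :: int assumes "0 < n" "t * int n < u * int n + int n" shows "t \<le> u"
proof -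
  have "t * int n < (u + 1) * int n" using assms(2) by (simp add: algebra_simps)
  then have "t < u + 1" using assms(1) by (simp add: mult_less_cancel_right)
  then show ?thesis by simp
qed

lemma per_window:
  assumes ins: "inside n Y" and ab: "(a - t * int n, b - t * int n) \<in> Y"
  shows "t * int n \<le> a" "b \<le> t * int n + int n"
  using ins ab unfolding inside_def by force+

lemma per_uncov0:
  assumes ins: "inside n Y" and n: "0 < n" shows "\<not> cov (per n Y) 0"
proof
  assume "cov (per n Y) 0"
  then obtain a b t where ab: "(a - t * int n, b - t * int n) \<in> Y" "a < 0" "0 < b"
    unfolding cov_def per_mem by auto
  note w = per_window[OF ins ab(1)]
  have "t \<le> -1" using win[OF n, of t "-1"] w ab by linarith
  moreover have "0 \<le> t" using win[OF n, of 0 t] w ab by linarith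
  ultimately show False by simp
qed

lemma per_cov_inner:
  assumes ins: "inside n Y" and n: "0 < n" and v: "0 < v" "v < int n" and c: "cov (per n Y) v"
  shows "cov Y v"
proof -
  obtain a b t where ab: "(a - t * int n, b - t * int n) \<in> Y" "a < v" "v < b"
    using c unfolding cov_def per_mem by auto
  note w = per_window[OF ins ab(1)]
  have "t \<le> 0" using win[OF n, of t 0] w ab v by linarith
  moreover have "0 \<le> t" using win[OF n, of 0 t] w ab v by linarith
  ultimately have "t = 0" by simp
  then show ?thesis using ab unfolding cov_def by auto
qed

lemma per_box:
  assumes ins: "inside n Y" and P: "ptolemy_inf Y" and n: "0 < n"
  shows "{p \<in> per n Y. 0 \<le> fst p \<and> snd p \<le> int n} = Y"
proof (rule set_eqI)
  fix p :: "int \<times> int"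
  obtain a b where p: "p = (a,b)" by fastforce
  show "p \<in> {p \<in> per n Y. 0 \<le> fst p \<and> snd p \<le> int n} \<longleftrightarrow> p \<in> Y"
  proof
    assume "p \<in> {p \<in> per n Y. 0 \<le> fst p \<and> snd p \<le> int n}"
    then have "(a,b) \<in> per n Y" "0 \<le> a" "b \<le> int n" using p by auto
    then obtain t where ab: "(a - t * int n, b - t * int n) \<in> Y" "0 \<le> a" "b \<le> int n"
      unfolding per_mem by auto
    note w = per_window[OF ins ab(1)]
    have l: "b - a \<ge> 2" using ptolemy_inf_arc[OF P ab(1)] by simp
    have "t \<le> 0" using win[OF n, of t 0] w ab l by linarith
    moreover have "0 \<le> t" using win[OF n, of 0 t] w ab l by linarith
    ultimately have "t = 0" by simp
    then show "p \<in> Y" using ab p by simp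
  next
    assume "p \<in> Y"
    then have "(a - 0 * int n, b - 0 * int n) \<in> Y" using p by simp
    then have "p \<in> per n Y" unfolding p per_mem by blast
    then show "p \<in> {p \<in> per n Y. 0 \<le> fst p \<and> snd p \<le> int n}"
      using \<open>p \<in> Y\<close> ins p unfolding inside_def by auto
  qed
qed

lemma per_PX:
  assumes Y: "Y \<in> LIN n" and n: "0 < n" shows "per n Y \<in> PX n"
proof -
  have ins: "inside n Y" and P: "ptolemy_inf Y" using Y unfolding LIN_def by auto
  have per: "periodic_arcs (int n) (per n Y)"
    unfolding periodic_arcs_def
  proof (intro allI impI)
    fix i j t assume "(i,j) \<in> per n Y"
    then obtain u where "(i - u * int n, j - u * int n) \<in> Y" unfolding per_mem by auto
    then have "(i + t * int n - (u + t) * int n, j + t * int n - (u + t) * int n) \<in> Y"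
      by (simp add: algebra_simps)
    then show "(i + t * int n, j + t * int n) \<in> per n Y" unfolding per_mem by blast
  qed
  have len: "\<forall>a\<in>per n Y. arc_length a \<le> int n"
  proof
    fix p assume pp: "p \<in> per n Y"
    obtain a b where p: "p = (a,b)" by fastforce
    have "(a,b) \<in> per n Y" using pp p by simp
    then obtain t where "(a - t * int n, b - t * int n) \<in> Y" unfolding per_mem by blast
    then have "0 \<le> a - t * int n" "b - t * int n \<le> int n" using ins unfolding inside_def by blast+
    then show "arc_length p \<le> int n" unfolding arc_length_def p by simp
  qed
  have Pp: "ptolemy_inf (per n Y)"
  proof (rule ptolemy_infI)
    fix a b assume "(a,b) \<in> per n Y"
    then obtain t where "(a - t * int n, b - t * int n) \<in> Y" unfolding per_mem by auto
    then show "b - a \<ge> 2" using ptolemy_inf_arc[OF P] by force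
  next
    fix i j r s assume h: "(i,j) \<in> per n Y" "(r,s) \<in> per n Y" "i < r" "r < j" "j < s"
    obtain t where t: "(i - t * int n, j - t * int n) \<in> Y" using h(1) unfolding per_mem by auto
    obtain u where u: "(r - u * int n, s - u * int n) \<in> Y" using h(2) unfolding per_mem by auto
    note wt = per_window[OF ins t] and wu = per_window[OF ins u]
    have "u \<le> t" using win[OF n, of u t] wt wu h by linarith
    moreover have "t \<le> u" using win[OF n, of t u] wt wu h by linarith
    ultimately have "u = t" by simp
    have Ps: "ptolemy_inf (shift (t * int n) Y)" by (rule ptolemy_inf_shift[OF P])
    have sub: "shift (t * int n) Y \<subseteq> per n Y" unfolding per_def by blast
    have m1: "(i,j) \<in> shift (t * int n) Y" "(r,s) \<in> shift (t * int n) Y" using t u \<open>u = t\<close> by auto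
    note D = ptolemy_infD[OF Ps m1 h(3-5)]
    show "(i,s) \<in> per n Y \<and> (r - i \<ge> 2 \<longrightarrow> (i,r) \<in> per n Y) \<and> (j - r \<ge> 2 \<longrightarrow> (r,j) \<in> per n Y) \<and> (s - j \<ge> 2 \<longrightarrow> (j,s) \<in> per n Y)"
      using D sub by blast
  qed
  show ?thesis unfolding PX_def using per len Pp by blast
qed

lemma ptolemy_inf_restr_box:
  assumes P: "ptolemy_inf Y" shows "ptolemy_inf {p \<in> Y. lo \<le> fst p \<and> snd p \<le> hi}"
proof (rule ptolemy_infI)
  fix a b assume "(a,b) \<in> {p \<in> Y. lo \<le> fst p \<and> snd p \<le> hi}"
  then show "b - a \<ge> 2" using ptolemy_inf_arc[OF P] by blast
next
  fix i j r s assume h: "(i,j) \<in> {p \<in> Y. lo \<le> fst p \<and> snd p \<le> hi}" "(r,s) \<in> {p \<in> Y. lo \<le> fst p \<and> snd p \<le> hi}" "i < r" "r < j" "j < s"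
  then have h': "(i,j) \<in> Y" "(r,s) \<in> Y" "lo \<le> i" "s \<le> hi" by auto
  note D = ptolemy_infD[OF P h'(1,2) h(3-5)]
  show "(i,s) \<in> {p \<in> Y. lo \<le> fst p \<and> snd p \<le> hi} \<and> (r - i \<ge> 2 \<longrightarrow> (i,r) \<in> {p \<in> Y. lo \<le> fst p \<and> snd p \<le> hi}) \<and> (j - r \<ge> 2 \<longrightarrow> (r,j) \<in> {p \<in> Y. lo \<le> fst p \<and> snd p \<le> hi}) \<and> (s - j \<ge> 2 \<longrightarrow> (j,s) \<in> {p \<in> Y. lo \<le> fst p \<and> snd p \<le> hi})"
    using D h h' by auto
qed

lemma box_LIN:
  assumes X: "X \<in> PX n" and n: "0 < n" and u: "\<not> cov X 0"
  shows "{p \<in> X. 0 \<le> fst p \<and> snd p \<le> int n} \<in> LIN n" "per n {p \<in> X. 0 \<le> fst p \<and> snd p \<le> int n} = X"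
proof -
  have per: "periodic_arcs (int n) X" and P: "ptolemy_inf X" using X unfolding PX_def by auto
  show "{p \<in> X. 0 \<le> fst p \<and> snd p \<le> int n} \<in> LIN n"
    unfolding LIN_def inside_def using ptolemy_inf_restr_box[OF P] by auto
  show "per n {p \<in> X. 0 \<le> fst p \<and> snd p \<le> int n} = X"
  proof (rule set_eqI)
    fix p :: "int \<times> int"
    obtain a b where p: "p = (a,b)" by fastforce
    show "p \<in> per n {p \<in> X. 0 \<le> fst p \<and> snd p \<le> int n} \<longleftrightarrow> p \<in> X"
    proof
      assume "p \<in> per n {p \<in> X. 0 \<le> fst p \<and> snd p \<le> int n}"
      then obtain t where "(a - t * int n, b - t * int n) \<in> X" unfolding p per_mem by auto
      from periodicD[OF per this, of t] show "p \<in> X" using p by simp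
    next
      assume pX: "p \<in> X"
      define t where "t = a div int n"
      have nn: "0 < int n" using n by simp
      have e: "t * int n + a mod int n = a" unfolding t_def by (rule div_mult_mod_eq)
      have e2: "(t+1) * int n = t * int n + int n" by (simp add: algebra_simps)
      have t1: "t * int n \<le> a" "a < (t+1) * int n"
        using e e2 pos_mod_sign[OF nn, of a] pos_mod_bound[OF nn, of a] by linarith+
      have "\<not> cov X (0 + (t+1) * int n)" by (rule periodic_uncov[OF per u])
      then have "b \<le> (t+1) * int n" using pX p t1 unfolding cov_def by force
      moreover have "(a + (-t) * int n, b + (-t) * int n) \<in> X" using periodicD[OF per] pX p by blast
      ultimately have "(a - t * int n, b - t * int n) \<in> {p \<in> X. 0 \<le> fst p \<and> snd p \<le> int n}"
        using t1 by (auto simp: algebra_simps)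
      then show "p \<in> per n {p \<in> X. 0 \<le> fst p \<and> snd p \<le> int n}" unfolding p per_mem by blast
    qed
  qed
qed

lemma PX_shift: assumes "X \<in> PX n" shows "shift d X \<in> PX n"
proof -
  have per: "periodic_arcs (int n) X" and P: "ptolemy_inf X" and L: "\<forall>a\<in>X. arc_length a \<le> int n"
    using assms unfolding PX_def by auto
  have "periodic_arcs (int n) (shift d X)" unfolding periodic_arcs_def
  proof (intro allI impI)
    fix i j t assume "(i,j) \<in> shift d X"
    then have "(i - d, j - d) \<in> X" by simp
    from periodicD[OF per this, of t] show "(i + t * int n, j + t * int n) \<in> shift d X" by (simp add: algebra_simps)
  qed
  moreover have "\<forall>a\<in>shift d X. arc_length a \<le> int n"
  proof
    fix p assume "p \<in> shift d X"
    then have "(fst p - d, snd p - d) \<in> X" by (cases p) simp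
    then show "arc_length p \<le> int n" using L unfolding arc_length_def by force
  qed
  ultimately show ?thesis using ptolemy_inf_shift[OF P] unfolding PX_def by blast
qed


definition Tset :: "nat \<Rightarrow> (((nat \<times> nat) set \<times> nat) list \<times> nat) set" where
  "Tset n = {(qs,k). qs \<in> Qs n \<and> k < snd (hd qs)}"

definition phi :: "nat \<Rightarrow> ((nat \<times> nat) set \<times> nat) list \<times> nat \<Rightarrow> (int \<times> int) set" where
  "phi n qk = shift (-(int (snd qk) + 1)) (per n (glue (fst qk)))"

lemma Y_sub_per: "Y \<subseteq> per n Y"
proof
  fix p assume "p \<in> Y" then show "p \<in> per n Y" unfolding per_def by (intro UN_I[of 0]) auto
qed

lemma phi_cov:
  assumes T: "(qs,k) \<in> Tset n" and n: "0 < n"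
  shows "\<not> cov (phi n (qs,k)) (-(int k + 1))" "\<And>w. -(int k+1) < w \<Longrightarrow> w < 0 \<Longrightarrow> cov (phi n (qs,k)) w"
proof -
  have Q: "qs \<in> Qs n" and k: "k < snd (hd qs)" using T unfolding Tset_def by auto
  have ins: "inside n (glue qs)" using glue_LIN[OF Q] unfolding LIN_def by auto
  have cs: "cov (phi n (qs,k)) w \<longleftrightarrow> cov (per n (glue qs)) (w + int k + 1)" for w
    unfolding phi_def by (simp add: cov_shift algebra_simps)
  show "\<not> cov (phi n (qs,k)) (-(int k + 1))" unfolding cs using per_uncov0[OF ins n] by simp
  fix w assume w: "-(int k+1) < w" "w < 0"
  obtain D N qs' where qs: "qs = (D,N) # qs'"
  proof (cases qs)
    case Nil then show ?thesis using Q n Qs_Nil by auto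
  next
    case (Cons a list) then show ?thesis using that by (cases a) auto
  qed
  have kN: "k < N" using k qs by simp
  then have "N \<ge> 2" using w by linarith
  then have "(0, int N) \<in> glue qs" using qs glue_Cons_arc by simp
  then have "(0, int N) \<in> per n (glue qs)" using Y_sub_per by blast
  then have "cov (per n (glue qs)) (w + int k + 1)" unfolding cov_def using w kN
    by (intro exI[of _ 0] exI[of _ "int N"]) auto
  then show "cov (phi n (qs,k)) w" unfolding cs .
qed

lemma phi_bij: assumes n: "0 < n" shows "bij_betw (phi n) (Tset n) (PX n)"
proof (rule bij_betw_imageI)
  show "inj_on (phi n) (Tset n)"
  proof (rule inj_onI)
    fix x y assume x: "x \<in> Tset n" and y: "y \<in> Tset n" and e: "phi n x = phi n y"
    obtain qs k where xx: "x = (qs,k)" by fastforce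
    obtain qs' k' where yy: "y = (qs',k')" by fastforce
    note cx = phi_cov[OF x[unfolded xx] n] and cy = phi_cov[OF y[unfolded yy] n]
    have kk: "k = k'"
    proof (rule ccontr)
      assume "k \<noteq> k'"
      then consider "k < k'" | "k' < k" by linarith
      then show False
      proof cases
        case 1 then show False using cx(1) cy(2)[of "-(int k+1)"] e xx yy by auto
      next
        case 2 then show False using cy(1) cx(2)[of "-(int k'+1)"] e xx yy by auto
      qed
    qed
    have "shift (-(int k + 1)) (per n (glue qs)) = shift (-(int k + 1)) (per n (glue qs'))"
      using e xx yy kk unfolding phi_def by simp
    then have pp: "per n (glue qs) = per n (glue qs')" by (rule shift_inj)
    have Q: "qs \<in> Qs n" "qs' \<in> Qs n" using x y xx yy unfolding Tset_def by auto
    have L1: "inside n (glue qs)" "ptolemy_inf (glue qs)" using glue_LIN[OF Q(1)] unfolding LIN_def by auto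
    have L2: "inside n (glue qs')" "ptolemy_inf (glue qs')" using glue_LIN[OF Q(2)] unfolding LIN_def by auto
    have "glue qs = {p \<in> per n (glue qs). 0 \<le> fst p \<and> snd p \<le> int n}" using per_box[OF L1 n] by simp
    also have "\<dots> = {p \<in> per n (glue qs'). 0 \<le> fst p \<and> snd p \<le> int n}" using pp by simp
    also have "\<dots> = glue qs'" using per_box[OF L2 n] by simp
    finally have "glue qs = glue qs'" .
    then have "qs = qs'" using glue_inj Q by blast
    then show "x = y" using xx yy kk by simp
  qed
next
  show "phi n ` Tset n = PX n"
  proof
    show "phi n ` Tset n \<subseteq> PX n"
    proof
      fix X assume "X \<in> phi n ` Tset n"
      then obtain qs k where T: "(qs,k) \<in> Tset n" "X = phi n (qs,k)" by auto
      then have "qs \<in> Qs n" unfolding Tset_def by simp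
      then have "per n (glue qs) \<in> PX n" using per_PX[OF glue_LIN n] by blast
      then show "X \<in> PX n" unfolding T(2) phi_def by (simp add: PX_shift)
    qed
  next
    show "PX n \<subseteq> phi n ` Tset n"
    proof
      fix X assume X: "X \<in> PX n"
      have per: "periodic_arcs (int n) X" and P: "ptolemy_inf X" and L: "\<forall>a\<in>X. arc_length a \<le> int n"
        using X unfolding PX_def by auto
      obtain v where v: "\<not> cov X v" using exists_uncov[OF P L] by blast
      define S where "S = {w \<in> {-int n..-1}. \<not> cov X w}"
      have nn: "0 < int n" using n by simp
      define w0 where "w0 = v + (- (v div int n) - 1) * int n"
      have e: "(v div int n) * int n + v mod int n = v" by (rule div_mult_mod_eq)
      have "w0 = v - (v div int n) * int n - int n" unfolding w0_def by (simp add: algebra_simps)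
      then have w0e: "w0 = v mod int n - int n" using e by linarith
      have w0r: "w0 \<in> {-int n..-1}" using w0e pos_mod_sign[OF nn, of v] pos_mod_bound[OF nn, of v]
        by simp
      have "\<not> cov X w0" unfolding w0_def by (rule periodic_uncov[OF per v])
      then have "w0 \<in> S" using w0r unfolding S_def by auto
      have finS: "finite S" unfolding S_def by (rule finite_subset[of _ "{-int n..-1}"]) auto
      define c where "c = Max S"
      have cS: "c \<in> S" unfolding c_def using finS \<open>w0 \<in> S\<close> by (intro Max_in) auto
      have cmax: "\<And>w. w \<in> S \<Longrightarrow> w \<le> c" unfolding c_def using finS by simp
      have cr: "-int n \<le> c" "c \<le> -1" and uc: "\<not> cov X c" using cS unfolding S_def by auto
      define k where "k = nat (-c-1)"
      have kc: "-(int k + 1) = c" unfolding k_def using cr by simp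
      define X0 where "X0 = shift (-c) X"
      have X0: "X0 \<in> PX n" unfolding X0_def using PX_shift[OF X] .
      have u0: "\<not> cov X0 0" unfolding X0_def cov_shift using uc by simp
      define Y where "Y = {p \<in> X0. 0 \<le> fst p \<and> snd p \<le> int n}"
      have YL: "Y \<in> LIN n" and pY: "per n Y = X0" using box_LIN[OF X0 n u0] unfolding Y_def by auto
      obtain qs where qs: "qs \<in> Qs n" "glue qs = Y" using glue_surj[OF YL] by blast
      obtain D N qs' where qsc: "qs = (D,N) # qs'"
      proof (cases qs)
        case Nil then show ?thesis using qs n Qs_Nil by auto
      next
        case (Cons a list) then show ?thesis using that by (cases a) auto
      qed
      have Nn: "N \<le> n" "1 \<le> N" using qs(1) unfolding qsc Qs_Cons by auto
      have uN: "\<not> cov Y (int N)" using glue_Cons_uncov qs qsc by blast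
      have "k < N"
      proof (rule ccontr)
        assume "\<not> k < N"
        then have kN: "N \<le> k" by simp
        then have "N < n" using cr k_def by linarith
        then have "\<not> cov X0 (int N)" using per_cov_inner[of n Y "int N"] uN pY n Nn YL unfolding LIN_def by auto
        then have "\<not> cov X (int N + c)" unfolding X0_def cov_shift by simp
        moreover have "int N + c \<in> {-int n..-1}" using kN kc Nn cr by auto
        ultimately have "int N + c \<in> S" unfolding S_def by auto
        then have "int N + c \<le> c" by (rule cmax)
        then show False using Nn by simp
      qed
      then have T: "(qs,k) \<in> Tset n" unfolding Tset_def using qs qsc by simp
      have "phi n (qs,k) = shift c (shift (-c) X)" unfolding phi_def using qs pY kc X0_def by simp
      also have "\<dots> = X" by simp
      finally show "X \<in> phi n ` Tset n" using T by (metis image_eqI)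
    qed
  qed
qed



lemma distinct_concat_idx:
  "distinct (concat xss) \<Longrightarrow> i < length xss \<Longrightarrow> j < length xss \<Longrightarrow> x \<in> set (xss!i) \<Longrightarrow> x \<in> set (xss!j) \<Longrightarrow> i = j"
proof (induction xss arbitrary: i j)
  case Nil then show ?case by simp
next
  case (Cons ys xss)
  show ?case
  proof (cases i)
    case 0
    show ?thesis
    proof (cases j)
      case (Suc j')
      then have "x \<in> set (concat xss)" using Cons.prems by auto
      moreover have "x \<in> set ys" using Cons.prems 0 by simp
      ultimately show ?thesis using Cons.prems(1) by auto
    qed (simp add: 0)
  next
    case (Suc i')
    show ?thesis
    proof (cases j)
      case 0
      then have "x \<in> set ys" using Cons.prems by simp
      moreover have "x \<in> set (concat xss)" using Cons.prems Suc by auto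
      ultimately show ?thesis using Cons.prems(1) by auto
    next
      case (Suc j')
      then show ?thesis using Cons.IH[of i' j'] Cons.prems \<open>i = Suc i'\<close> by auto
    qed
  qed
qed

lemma concat_map_length_inj:
  "map length xss = map length yss \<Longrightarrow> concat xss = concat yss \<Longrightarrow> xss = yss"
proof (induction xss arbitrary: yss)
  case Nil then show ?case by simp
next
  case (Cons xs xss)
  then obtain ys yss' where y: "yss = ys # yss'" by (cases yss) auto
  have l: "length xs = length ys" using Cons.prems y by simp
  have "xs @ concat xss = ys @ concat yss'" using Cons.prems y by simp
  then have "xs = ys" "concat xss = concat yss'" using l by auto
  then show ?case using Cons.IH[of yss'] Cons.prems y by simp
qed

fun splitL :: "('b \<times> nat) list \<Rightarrow> 'a list \<Rightarrow> ('b \<times> 'a list) list" where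
  "splitL [] L = []"
| "splitL (q # qs) L = (fst q, take (snd q) L) # splitL qs (drop (snd q) L)"

lemma splitL_props:
  "sum_list (map snd qs) = length L \<Longrightarrow>
    map (\<lambda>p. (fst p, length (snd p))) (splitL qs L) = qs \<and> concat (map snd (splitL qs L)) = L"
proof (induction qs arbitrary: L)
  case Nil then show ?case by simp
next
  case (Cons q qs)
  have "sum_list (map snd qs) = length (drop (snd q) L)" using Cons.prems by simp
  then show ?case using Cons.IH[of "drop (snd q) L"] Cons.prems by (cases q) auto
qed

lemma splitL_sub: "p \<in> set (splitL qs L) \<Longrightarrow> \<exists>q \<in> set qs. fst p = fst q \<and> (\<exists>i. snd p = take (snd q) (drop i L))"
proof (induction qs arbitrary: L)
  case Nil then show ?case by simp
next
  case (Cons q qs)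
  show ?case
  proof (cases "p = (fst q, take (snd q) L)")
    case True then show ?thesis by (intro bexI[of _ q]) (auto intro: exI[of _ 0])
  next
    case False
    then have "p \<in> set (splitL qs (drop (snd q) L))" using Cons.prems by simp
    from Cons.IH[OF this] obtain q' i where "q' \<in> set qs" "fst p = fst q'" "snd p = take (snd q') (drop i (drop (snd q) L))"
      by blast
    then show ?thesis by (intro bexI[of _ q']) auto
  qed
qed


lemma distinct_concat_mem: "distinct (concat xss) \<Longrightarrow> xs \<in> set xss \<Longrightarrow> distinct xs"
  by (induction xss) auto

lemma P_struct_self: "p \<in> P_struct (set (snd p)) \<longleftrightarrow> distinct (snd p) \<and> snd p \<noteq> [] \<and> ptolemy_poly (length (snd p) + 1) (fst p)"
  by (cases p) (simp add: P_struct_def)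

definition Aset :: "'a set \<Rightarrow> (((nat \<times> nat) set \<times> 'a list) list \<times> nat) set" where
  "Aset U = {(ps,k). CP_valid U ps \<and> k < length (snd (hd ps))}"

definition LU :: "'a set \<Rightarrow> 'a list set" where
  "LU U = {L. distinct L \<and> set L = U}"

definition beta3 :: "((nat \<times> nat) set \<times> 'a list) list \<times> nat \<Rightarrow> (((nat \<times> nat) set \<times> nat) list \<times> nat) \<times> 'a list" where
  "beta3 pk = ((map (\<lambda>p. (fst p, length (snd p))) (fst pk), snd pk), concat (map snd (fst pk)))"

lemma LU_length: "L \<in> LU U \<Longrightarrow> length L = card U"
  unfolding LU_def using distinct_card by fastforce

lemma beta3_bij:
  assumes n: "1 \<le> card U"
  shows "bij_betw beta3 (Aset U) (Tset (card U) \<times> LU U)"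
proof (rule bij_betw_imageI)
  show "inj_on beta3 (Aset U)"
  proof (rule inj_onI)
    fix x y assume "x \<in> Aset U" "y \<in> Aset U" and e: "beta3 x = beta3 y"
    obtain ps k where x: "x = (ps,k)" by fastforce
    obtain ps' k' where y: "y = (ps',k')" by fastforce
    have m: "map (\<lambda>p. (fst p, length (snd p))) ps = map (\<lambda>p. (fst p, length (snd p))) ps'"
      and kk: "k = k'" and c: "concat (map snd ps) = concat (map snd ps')"
      using e unfolding x y beta3_def by auto
    have "map fst ps = map fst ps'" using arg_cong[OF m, of "map fst"] by (simp add: comp_def)
    moreover have "map length (map snd ps) = map length (map snd ps')" using arg_cong[OF m, of "map snd"] by (simp add: comp_def)
    then have "map snd ps = map snd ps'" using c concat_map_length_inj by blast
    ultimately have "ps = ps'" by (metis zip_map_fst_snd)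
    then show "x = y" using x y kk by simp
  qed
next
  show "beta3 ` Aset U = Tset (card U) \<times> LU U"
  proof
    show "beta3 ` Aset U \<subseteq> Tset (card U) \<times> LU U"
    proof
      fix z assume "z \<in> beta3 ` Aset U"
      then obtain ps k where A: "(ps,k) \<in> Aset U" and z: "z = beta3 (ps,k)" by auto
      have V: "CP_valid U ps" and k: "k < length (snd (hd ps))" using A unfolding Aset_def by auto
      have ne: "ps \<noteq> []" and Pp: "\<forall>p\<in>set ps. p \<in> P_struct (set (snd p))"
        and dc: "distinct (concat (map snd ps))" and sc: "set (concat (map snd ps)) = U"
        using V unfolding CP_valid_def by auto
      have LU: "concat (map snd ps) \<in> LU U" using dc sc unfolding LU_def by simp
      have len: "sum_list (map length (map snd ps)) = card U"
        using LU_length[OF LU] by (simp add: length_concat)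
      have "map (\<lambda>p. (fst p, length (snd p))) ps \<in> Qs (card U)"
        unfolding Qs_def
      proof (intro CollectI conjI ballI)
        fix q assume "q \<in> set (map (\<lambda>p. (fst p, length (snd p))) ps)"
        then obtain p where p: "p \<in> set ps" "q = (fst p, length (snd p))" by auto
        then have "distinct (snd p) \<and> snd p \<noteq> [] \<and> ptolemy_poly (length (snd p) + 1) (fst p)"
          using Pp P_struct_self by blast
        then show "snd q \<ge> 1" "ptolemy_poly (snd q + 1) (fst q)" using p by (auto simp: Suc_le_eq)
      next
        show "sum_list (map snd (map (\<lambda>p. (fst p, length (snd p))) ps)) = card U"
          using len by (simp add: comp_def)
      qed
      moreover have "k < snd (hd (map (\<lambda>p. (fst p, length (snd p))) ps))" using k ne by (simp add: hd_map)
      ultimately show "z \<in> Tset (card U) \<times> LU U" using LU unfolding z beta3_def Tset_def by simp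
    qed
  next
    show "Tset (card U) \<times> LU U \<subseteq> beta3 ` Aset U"
    proof
      fix z assume "z \<in> Tset (card U) \<times> LU U"
      then obtain qs k L where z: "z = ((qs,k),L)" and Q: "qs \<in> Qs (card U)" and k: "k < snd (hd qs)"
        and L: "L \<in> LU U" unfolding Tset_def by auto
      have sum: "sum_list (map snd qs) = length L" using Q LU_length[OF L] unfolding Qs_def by simp
      define ps where "ps = splitL qs L"
      have sp: "map (\<lambda>p. (fst p, length (snd p))) ps = qs" "concat (map snd ps) = L"
        using splitL_props[OF sum] unfolding ps_def by auto
      have qne: "qs \<noteq> []" using Q n Qs_Nil by (cases qs) auto
      then have pne: "ps \<noteq> []" using sp(1) by auto
      have dL: "distinct L" "set L = U" using L unfolding LU_def by auto
      have "CP_valid U ps" unfolding CP_valid_def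
      proof (intro conjI ballI)
        show "ps \<noteq> []" by (rule pne)
        show "distinct (concat (map snd ps))" "set (concat (map snd ps)) = U" using sp dL by auto
        fix p assume p: "p \<in> set ps"
        then have "(fst p, length (snd p)) \<in> set qs" using sp(1) by force
        then have "length (snd p) \<ge> 1" "ptolemy_poly (length (snd p) + 1) (fst p)" using Q unfolding Qs_def by auto
        moreover have "distinct (snd p)" using distinct_concat_mem[of "map snd ps" "snd p"] sp dL p by auto
        ultimately show "p \<in> P_struct (set (snd p))" unfolding P_struct_self by auto
      qed
      moreover have "k < length (snd (hd ps))"
        using k sp(1) pne by (metis (no_types, lifting) hd_map snd_conv)
      ultimately have "(ps,k) \<in> Aset U" unfolding Aset_def by simp
      moreover have "beta3 (ps,k) = z" unfolding beta3_def z using sp by simp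
      ultimately show "z \<in> beta3 ` Aset U" by (metis image_eqI)
    qed
  qed
qed


definition orb :: "'b list \<Rightarrow> 'b list set" where
  "orb ps = {rotate k ps | k. True}"

lemma distinct_concat_rotate: "distinct (concat (rotate i xss)) = distinct (concat xss)"
proof -
  define m where "m = i mod length xss"
  have "rotate i xss = drop m xss @ take m xss" unfolding m_def by (rule rotate_drop_take)
  moreover have "concat xss = concat (take m xss) @ concat (drop m xss)"
    by (metis append_take_drop_id concat_append)
  ultimately show ?thesis by (auto simp: distinct_append)
qed

lemma CP_valid_rotate: "CP_valid U ps \<Longrightarrow> CP_valid U (rotate i ps)"
  unfolding CP_valid_def by (simp add: rotate_map[symmetric] distinct_concat_rotate)

lemma orb_rotate: "orb (rotate i ps) = orb ps"
proof -
  have "rotate j ps \<in> orb (rotate i ps)" for j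
  proof (cases "ps = []")
    case True then show ?thesis unfolding orb_def by auto
  next
    case False
    define l where "l = length ps"
    have l0: "0 < l" using False unfolding l_def by simp
    define m where "m = j + (l - i mod l)"
    have "(m + i) mod l = j mod l"
    proof -
      have "m + i = j + (l - i mod l + i mod l) + l * (i div l)" unfolding m_def
        by (metis add.assoc add.commute div_mult_mod_eq mult.commute)
      also have "\<dots> = j + (i div l + 1) * l" using mod_less_divisor[OF l0, of i] by (simp add: algebra_simps)
      finally have e: "m + i = j + (i div l + 1) * l" .
      show ?thesis unfolding e by (rule mod_mult_self1)
    qed
    then have "rotate m (rotate i ps) = rotate j ps"
      unfolding rotate_rotate by (metis rotate_conv_mod l_def)
    then show ?thesis unfolding orb_def by (intro CollectI exI[of _ m]) simp
  qed
  moreover have "rotate j (rotate i ps) \<in> orb ps" for j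
    unfolding orb_def rotate_rotate by blast
  ultimately show ?thesis unfolding orb_def by blast
qed

definition beta2 :: "((nat \<times> nat) set \<times> 'a list) list \<times> nat \<Rightarrow> ((nat \<times> nat) set \<times> 'a list) list set \<times> 'a" where
  "beta2 pk = (orb (fst pk), snd (hd (fst pk)) ! snd pk)"

lemma beta2_bij: "bij_betw beta2 (Aset U) (CP_pointed U)"
proof (rule bij_betw_imageI)
  show "inj_on beta2 (Aset U)"
  proof (rule inj_onI)
    fix x y assume xA: "x \<in> Aset U" and yA: "y \<in> Aset U" and e: "beta2 x = beta2 y"
    obtain ps k where x: "x = (ps,k)" by fastforce
    obtain ps' k' where y: "y = (ps',k')" by fastforce
    have V: "CP_valid U ps" "k < length (snd (hd ps))" using xA x unfolding Aset_def by auto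
    have V': "CP_valid U ps'" "k' < length (snd (hd ps'))" using yA y unfolding Aset_def by auto
    have o: "orb ps = orb ps'" and u: "snd (hd ps) ! k = snd (hd ps') ! k'" using e x y unfolding beta2_def by auto
    have "ps' \<in> orb ps'" unfolding orb_def by (intro CollectI exI[of _ 0]) simp
    then obtain j where j: "ps' = rotate j ps" using o unfolding orb_def by auto
    have ne: "ps \<noteq> []" using V unfolding CP_valid_def by simp
    have dc: "distinct (concat (map snd ps))" using V unfolding CP_valid_def by simp
    have h1: "hd ps = ps ! 0" using ne by (simp add: hd_conv_nth)
    have h2: "hd ps' = ps ! (j mod length ps)" using j ne by (simp add: hd_rotate_conv_nth)
    have "snd (hd ps) ! k \<in> set (map snd ps ! 0)" using V(2) h1 ne by simp
    moreover have "snd (hd ps) ! k \<in> set (map snd ps ! (j mod length ps))" using u V'(2) h2 ne by simp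
    ultimately have "0 = j mod length ps"
      using distinct_concat_idx[OF dc, of 0 "j mod length ps"] ne by simp
    then have pp: "ps' = ps" using j by (metis rotate_conv_mod rotate0 id_apply)
    have "distinct (snd (hd ps))"
      using V ne unfolding CP_valid_def P_struct_self by auto
    then have "k = k'" using u pp V(2) V'(2) by (simp add: nth_eq_iff_index_eq)
    then show "x = y" using x y pp by simp
  qed
next
  show "beta2 ` Aset U = CP_pointed U"
  proof
    show "beta2 ` Aset U \<subseteq> CP_pointed U"
    proof
      fix z assume "z \<in> beta2 ` Aset U"
      then obtain ps k where A: "(ps,k) \<in> Aset U" and z: "z = beta2 (ps,k)" by auto
      have V: "CP_valid U ps" "k < length (snd (hd ps))" using A unfolding Aset_def by auto
      have ne: "ps \<noteq> []" using V unfolding CP_valid_def by simp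
      have "snd (hd ps) ! k \<in> set (snd (hd ps))" using V(2) by simp
      moreover have "set (snd (hd ps)) \<subseteq> U" using V ne unfolding CP_valid_def by (auto simp: hd_in_set)
      ultimately have "snd (hd ps) ! k \<in> U" by blast
      moreover have "orb ps \<in> CP_struct U" unfolding CP_struct_def orb_def using V by blast
      ultimately show "z \<in> CP_pointed U" unfolding z beta2_def CP_pointed_def by simp
    qed
  next
    show "CP_pointed U \<subseteq> beta2 ` Aset U"
    proof
      fix z assume "z \<in> CP_pointed U"
      then obtain ps u where z: "z = (orb ps, u)" and V: "CP_valid U ps" and uU: "u \<in> U"
        unfolding CP_pointed_def CP_struct_def orb_def by auto
      have "u \<in> set (concat (map snd ps))" using V uU unfolding CP_valid_def by simp
      then obtain xs where xs: "xs \<in> set (map snd ps)" "u \<in> set xs" by auto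
      then obtain i where i0: "i < length ps" "xs = snd (ps!i)" by (auto simp: in_set_conv_nth)
      then have i: "i < length ps" "u \<in> set (snd (ps ! i))" using xs by auto
      define ps2 where "ps2 = rotate i ps"
      have V2: "CP_valid U ps2" unfolding ps2_def by (rule CP_valid_rotate[OF V])
      have ne: "ps \<noteq> []" using i by auto
      have "hd ps2 = ps ! i" unfolding ps2_def using ne i by (simp add: hd_rotate_conv_nth)
      then have "u \<in> set (snd (hd ps2))" using i by simp
      then obtain k where k: "k < length (snd (hd ps2))" "snd (hd ps2) ! k = u" by (auto simp: in_set_conv_nth)
      have "(ps2,k) \<in> Aset U" unfolding Aset_def using V2 k by simp
      moreover have "beta2 (ps2,k) = z" unfolding beta2_def z ps2_def using k orb_rotate ps2_def by simp
      ultimately show "z \<in> beta2 ` Aset U" by (metis image_eqI)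
    qed
  qed
qed


definition cls :: "nat \<Rightarrow> int \<Rightarrow> int set" where
  "cls n i = {k. k mod int n = i mod int n}"

definition rr :: "nat \<Rightarrow> int set \<Rightarrow> nat" where
  "rr n C = nat ((SOME m. m \<in> C) mod int n)"

definition lamOf :: "nat \<Rightarrow> 'a list \<Rightarrow> int set \<Rightarrow> 'a" where
  "lamOf n L = restrict (\<lambda>C. L ! rr n C) (zmod_classes (int n))"

lemma zmod_classes_cls: "zmod_classes (int n) = range (cls n)"
  unfolding zmod_classes_def cls_def by auto

lemma rr_cls: assumes "0 < n" shows "rr n (cls n i) = nat (i mod int n)"
proof -
  have "i \<in> cls n i" unfolding cls_def by simp
  then have "(SOME m. m \<in> cls n i) \<in> cls n i" by (rule someI)
  then show ?thesis unfolding rr_def cls_def by simp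
qed

lemma rr_lt: assumes "0 < n" "C \<in> zmod_classes (int n)" shows "rr n C < n"
proof -
  obtain i where C: "C = cls n i" using assms(2) unfolding zmod_classes_cls by auto
  have "i mod int n < int n" using assms(1) by simp
  then show ?thesis unfolding C rr_cls[OF assms(1)] using assms(1) by (simp add: nat_less_iff)
qed

lemma cls_rr: assumes "0 < n" "C \<in> zmod_classes (int n)" shows "cls n (int (rr n C)) = C"
proof -
  obtain i where C: "C = cls n i" using assms(2) unfolding zmod_classes_cls by auto
  have e: "int (nat (i mod int n)) = i mod int n" using assms(1) by simp
  have r: "rr n C = nat (i mod int n)" using rr_cls[OF assms(1)] C by simp
  show ?thesis unfolding r e unfolding C cls_def by simp
qed

lemma rr_int: assumes "0 < n" "j < n" shows "rr n (cls n (int j)) = j"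
  unfolding rr_cls[OF assms(1)] using assms by simp

lemma cls_in: "cls n i \<in> zmod_classes (int n)" unfolding zmod_classes_cls by simp

definition beta1 :: "nat \<Rightarrow> (int \<times> int) set \<times> 'a list \<Rightarrow> (int \<times> int) set \<times> (int set \<Rightarrow> 'a)" where
  "beta1 n xl = (fst xl, lamOf n (snd xl))"

lemma beta1_bij:
  assumes n: "1 \<le> card U"
  shows "bij_betw (beta1 (card U)) (PX (card U) \<times> LU U) (periodic_pairs U)"
proof -
  define n where "n = card U"
  have n0: "0 < n" using n unfolding n_def by simp
  have lamOf_in: "lamOf n L \<in> zmod_classes (int n) \<rightarrow>\<^sub>E U \<and> bij_betw (lamOf n L) (zmod_classes (int n)) U"
    if L: "L \<in> LU U" for L
  proof -
    have len: "length L = n" using LU_length[OF L] unfolding n_def .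
    have dL: "distinct L" "set L = U" using L unfolding LU_def by auto
    have val: "lamOf n L C = L ! rr n C" if "C \<in> zmod_classes (int n)" for C
      unfolding lamOf_def using that by simp
    have inU: "L ! rr n C \<in> U" if "C \<in> zmod_classes (int n)" for C
      using rr_lt[OF n0 that] len dL by auto
    have "lamOf n L \<in> zmod_classes (int n) \<rightarrow>\<^sub>E U"
      unfolding lamOf_def using inU by auto
    moreover have "bij_betw (lamOf n L) (zmod_classes (int n)) U"
    proof (rule bij_betw_imageI)
      show "inj_on (lamOf n L) (zmod_classes (int n))"
      proof (rule inj_onI)
        fix C1 C2 assume c: "C1 \<in> zmod_classes (int n)" "C2 \<in> zmod_classes (int n)" and e: "lamOf n L C1 = lamOf n L C2"
        then have "L ! rr n C1 = L ! rr n C2" using val by simp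
        then have "rr n C1 = rr n C2" using dL(1) rr_lt[OF n0 c(1)] rr_lt[OF n0 c(2)] len
          by (simp add: nth_eq_iff_index_eq)
        then show "C1 = C2" using cls_rr[OF n0 c(1)] cls_rr[OF n0 c(2)] by metis
      qed
      show "lamOf n L ` zmod_classes (int n) = U"
      proof
        show "lamOf n L ` zmod_classes (int n) \<subseteq> U" using inU val by auto
        show "U \<subseteq> lamOf n L ` zmod_classes (int n)"
        proof
          fix u assume "u \<in> U"
          then obtain j where j: "j < length L" "L ! j = u" using dL by (auto simp: in_set_conv_nth)
          have "lamOf n L (cls n (int j)) = u" using val[OF cls_in] rr_int[OF n0] j len by simp
          then show "u \<in> lamOf n L ` zmod_classes (int n)" using cls_in by (metis image_eqI)
        qed
      qed
    qed
    ultimately show ?thesis by blast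
  qed
  have "bij_betw (beta1 n) (PX n \<times> LU U) (periodic_pairs U)"
  proof (rule bij_betw_imageI)
    show "inj_on (beta1 n) (PX n \<times> LU U)"
    proof (rule inj_onI)
      fix x y assume x: "x \<in> PX n \<times> LU U" and y: "y \<in> PX n \<times> LU U" and e: "beta1 n x = beta1 n y"
      have f: "fst x = fst y" and l: "lamOf n (snd x) = lamOf n (snd y)" using e unfolding beta1_def by auto
      have lx: "length (snd x) = n" and ly: "length (snd y) = n" using LU_length x y unfolding n_def by auto
      have "snd x ! j = snd y ! j" if "j < n" for j
      proof -
        have "lamOf n (snd x) (cls n (int j)) = lamOf n (snd y) (cls n (int j))" using l by simp
        then show ?thesis unfolding lamOf_def using cls_in rr_int[OF n0 that] by simp
      qed
      then have "snd x = snd y" using lx ly by (intro nth_equalityI) auto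
      then show "x = y" using f by (simp add: prod_eq_iff)
    qed
    show "beta1 n ` (PX n \<times> LU U) = periodic_pairs U"
    proof
      show "beta1 n ` (PX n \<times> LU U) \<subseteq> periodic_pairs U"
      proof
        fix z assume "z \<in> beta1 n ` (PX n \<times> LU U)"
        then obtain X L where XL: "X \<in> PX n" "L \<in> LU U" "z = (X, lamOf n L)" unfolding beta1_def by auto
        then show "z \<in> periodic_pairs U" using lamOf_in[OF XL(2)]
          unfolding periodic_pairs_def PX_def n_def by auto
      qed
      show "periodic_pairs U \<subseteq> beta1 n ` (PX n \<times> LU U)"
      proof
        fix z assume "z \<in> periodic_pairs U"
        then obtain X lam where z: "z = (X,lam)" and X: "X \<in> PX n"
          and lE: "lam \<in> zmod_classes (int n) \<rightarrow>\<^sub>E U" and lb: "bij_betw lam (zmod_classes (int n)) U"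
          unfolding periodic_pairs_def PX_def n_def by auto
        define L where "L = map (\<lambda>j. lam (cls n (int j))) [0..<n]"
        have len: "length L = n" unfolding L_def by simp
        have Lj: "L ! j = lam (cls n (int j))" if "j < n" for j unfolding L_def using that by simp
        have inj: "inj_on lam (zmod_classes (int n))" using lb by (rule bij_betw_imp_inj_on)
        have dist: "distinct L"
        proof (rule distinct_conv_nth[THEN iffD2], intro allI impI)
          fix i j assume ij: "i < length L" "j < length L" "i \<noteq> j"
          show "L ! i \<noteq> L ! j"
          proof
            assume "L ! i = L ! j"
            then have "lam (cls n (int i)) = lam (cls n (int j))" using Lj ij len by simp
            then have "cls n (int i) = cls n (int j)" using inj cls_in by (meson inj_onD)
            then have "rr n (cls n (int i)) = rr n (cls n (int j))" by simp
            then show False using rr_int[OF n0] ij len by simp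
          qed
        qed
        have setL: "set L = U"
        proof
          show "set L \<subseteq> U" unfolding L_def using lE cls_in by auto
          show "U \<subseteq> set L"
          proof
            fix u assume "u \<in> U"
            then obtain C where C: "C \<in> zmod_classes (int n)" "lam C = u" using lb unfolding bij_betw_def by auto
            have "L ! rr n C = u" using Lj[OF rr_lt[OF n0 C(1)]] cls_rr[OF n0 C(1)] C by simp
            then show "u \<in> set L" using rr_lt[OF n0 C(1)] len by (metis nth_mem)
          qed
        qed
        have LLU: "L \<in> LU U" unfolding LU_def using dist setL by simp
        have "lamOf n L = lam"
        proof
          fix C show "lamOf n L C = lam C"
          proof (cases "C \<in> zmod_classes (int n)")
            case True
            then show ?thesis unfolding lamOf_def using Lj[OF rr_lt[OF n0 True]] cls_rr[OF n0 True] by simp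
          next
            case False
            then show ?thesis unfolding lamOf_def using lE by (simp add: PiE_def extensional_def)
          qed
        qed
        then have "beta1 n (X,L) = z" unfolding beta1_def z by simp
        then show "z \<in> beta1 n ` (PX n \<times> LU U)" using X LLU by (metis SigmaI image_eqI)
      qed
    qed
  qed
  then show ?thesis unfolding n_def .
qed

theorem mainTheorem8:
  fixes U :: "'a set"
  assumes "finite U" and "card U \<ge> 1"
  shows "\<exists>f. bij_betw f (CP_pointed U) (periodic_pairs U)"
proof -
  have n0: "0 < card U" using assms(2) by simp
  have b2: "bij_betw (inv_into (Aset U) beta2) (CP_pointed U) (Aset U)"
    by (rule bij_betw_inv_into[OF beta2_bij])
  have b3: "bij_betw beta3 (Aset U) (Tset (card U) \<times> LU U)" by (rule beta3_bij[OF assms(2)])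
  have bp: "bij_betw (map_prod (phi (card U)) id) (Tset (card U) \<times> LU U) (PX (card U) \<times> LU U)"
    by (rule bij_betw_map_prod[OF phi_bij[OF n0] bij_betw_id])
  have b1: "bij_betw (beta1 (card U)) (PX (card U) \<times> LU U) (periodic_pairs U)" by (rule beta1_bij[OF assms(2)])
  show ?thesis
    using bij_betw_trans[OF bij_betw_trans[OF bij_betw_trans[OF b2 b3] bp] b1] by blast
qed

end
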